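(* Let $p$ be a complex polynomial of degree $d \geq 2$ such that $H_p = p^{-1}(H_p) = J_p$, where $H_p=\operatorname{conv}J_p$. Then $p$ is affinely conjugate to the Chebyshev polynomial $T_d$ or to $-T_d$; that is, there exist $a\in\mathbb{C}\setminus\{0\}$, $b\in\mathbb{C}$ such that, with $g(z)=az+b$, one has $g\circ p\circ g^{-1} = T_d$ or $g\circ p\circ g^{-1} = -T_d$.
   Context: For a polynomial $p$ viewed as a holomorphic self-map of the Riemann sphere $\widehat{\mathbb{C}}$ (with $p(\infty)=\infty$), the Fatou set $F_p$ is the maximal open subset of $\widehat{\mathbb{C}}$ on which the iterates $\{p^{\circ n}\}_{n\in\mathbb{N}}$ form an equicontinuous family, and the Julia set $J_p$ is the complement $\widehat{\mathbb{C}}\setminus F_p$. $\operatorname{conv} X$ denotes the convex hull of $X \subset \mathbb{C}\cong\mathbb{R}^2$. The Chebyshev polynomial $T_d$ of degree $d$ is the polynomial satisfying $T_d(\cos z)=\cos(dz)$ for all $z$. *)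

theory Defs
  imports "HOL-Analysis.Analysis" "HOL-Computational_Algebra.Polynomial"
begin

definition chordal_dist :: "complex \<Rightarrow> complex \<Rightarrow> real" where
  "chordal_dist z w = 2 * cmod (z - w) / (sqrt (1 + (cmod z)\<^sup>2) * sqrt (1 + (cmod w)\<^sup>2))"

definition iterates_equicontinuous_on :: "complex set \<Rightarrow> (complex \<Rightarrow> complex) \<Rightarrow> bool" where
  "iterates_equicontinuous_on U f \<longleftrightarrow>
     (\<forall>z0\<in>U. \<forall>\<epsilon>>0. \<exists>\<delta>>0. \<forall>n::nat. \<forall>z\<in>U.
        dist z z0 < \<delta> \<longrightarrow> chordal_dist ((f ^^ n) z) ((f ^^ n) z0) < \<epsilon>)"

definition fatou_set :: "complex poly \<Rightarrow> complex set" where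
  "fatou_set p = \<Union>{U. open U \<and> iterates_equicontinuous_on U (poly p)}"

text \<open>Julia set (a subset of the complex plane; infinity lies in the Fatou set for degree \<ge> 2).\<close>
definition julia_set :: "complex poly \<Rightarrow> complex set" where
  "julia_set p = UNIV - fatou_set p"

definition is_chebyshev :: "nat \<Rightarrow> (complex \<Rightarrow> complex) \<Rightarrow> bool" where
  "is_chebyshev d f \<longleftrightarrow> (\<exists>q. f = poly q) \<and> (\<forall>z. f (cos z) = cos (of_nat d * z))"

end

theory Submission
  imports Defs "HOL-Complex_Analysis.Complex_Analysis" "HOL-Computational_Algebra.Fundamental_Theorem_Algebra"
begin


fun cheb :: "nat \<Rightarrow> complex poly" where
  "cheb 0 = 1"
| "cheb (Suc 0) = [:0,1:]"
| "cheb (Suc (Suc n)) = [:0,2:] * cheb (Suc n) - cheb n"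

lemma cheb_cos: "poly (cheb n) (cos z) = cos (of_nat n * z)"
proof (induction n rule: cheb.induct)
  case (3 n)
  define a where "a = of_nat (Suc n) * z"
  have c: "cos (a + z) = 2 * cos z * cos a - cos (a - z)"
    by (simp add: cos_add cos_diff)
  moreover have "of_nat (Suc (Suc n)) * z = a + z" "of_nat n * z = a - z"
    by (simp_all add: a_def algebra_simps)
  ultimately have "cos (of_nat (Suc (Suc n)) * z) = 2 * cos z * cos (of_nat (Suc n) * z) - cos (of_nat n * z)"
    using c by (simp only: a_def)
  then show ?case using 3 by simp
qed simp_all

definition Lop :: "nat \<Rightarrow> complex poly \<Rightarrow> complex poly" where
  "Lop d P = [:1,0,-1:] * pderiv (pderiv P) - [:0,1:] * pderiv P + smult (of_nat (d^2)) P"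

lemma coeff_Lop: "coeff (Lop d P) k =
   (of_nat (d^2) - of_nat (k^2)) * coeff P k + of_nat ((k+2)*(k+1)) * coeff P (k+2)"
proof -
  have e1: "[:1,0,-1:] * X = X - pCons 0 (pCons 0 X)" for X :: "complex poly"
    by (simp add: algebra_simps)
  have e2: "[:0,1:] * X = pCons 0 X" for X :: "complex poly" by simp
  show ?thesis
    unfolding Lop_def e1 e2
    by (cases k; cases "k - 1")
       (auto simp: coeff_pderiv coeff_pCons algebra_simps power2_eq_square split: nat.splits)
qed

lemma Lop_lin_aux: "(A::complex poly) * (P2 - smult c Q2) - B * (P1 - smult c Q1) + smult k (P - smult c Q)
   = (A * P2 - B * P1 + smult k P) - smult c (A * Q2 - B * Q1 + smult k Q)"
  by (simp add: smult_diff_right smult_add_right mult_smult_right smult_smult algebra_simps mult.commute)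

lemma Lop_lin: "Lop d (P - smult c Q) = Lop d P - smult c (Lop d Q)"
  unfolding Lop_def pderiv_diff pderiv_smult by (rule Lop_lin_aux)

lemma Lop_degree:
  assumes "Lop d P = 0" "P \<noteq> 0" shows "degree P = d"
proof -
  let ?k = "degree P"
  have "coeff (Lop d P) ?k = (of_nat (d^2) - of_nat (?k^2)) * lead_coeff P"
    by (simp add: coeff_Lop coeff_eq_0)
  with assms have "(of_nat (d^2) - of_nat (?k^2) :: complex) = 0" by simp
  hence "d^2 = ?k^2" by (metis of_nat_eq_iff right_minus_eq)
  thus ?thesis using power_eq_iff_eq_base[of 2 d ?k] by simp
qed

lemma Lop_unique:
  assumes "Lop d P = 0" "Lop d Q = 0" "Q \<noteq> 0"
  shows "\<exists>c. P = smult c Q"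
proof (cases "P = 0")
  case True thus ?thesis by (intro exI[of _ 0]) simp
next
  case False
  define c where "c = lead_coeff P / lead_coeff Q"
  define D where "D = P - smult c Q"
  have dP: "degree P = d" and dQ: "degree Q = d" using Lop_degree assms False by auto
  have LD: "Lop d D = 0" unfolding D_def Lop_lin using assms by simp
  have "coeff Q d \<noteq> 0" using dQ assms(3) by (metis leading_coeff_0_iff)
  hence "coeff D d = 0" using dP dQ by (simp add: D_def c_def)
  moreover have "D \<noteq> 0 \<Longrightarrow> coeff D d \<noteq> 0" using Lop_degree[OF LD] by auto
  ultimately have "D = 0" by blast
  thus ?thesis unfolding D_def by auto
qed

lemma poly_zero_on_interval:
  fixes P :: "complex poly"
  assumes "\<And>x::real. -1 \<le> x \<Longrightarrow> x \<le> 1 \<Longrightarrow> poly P (of_real x) = 0"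
  shows "P = 0"
proof (rule ccontr)
  assume "P \<noteq> 0"
  hence fin: "finite {x. poly P x = 0}" by (rule poly_roots_finite)
  have "of_real ` {-1..1::real} \<subseteq> {x. poly P x = 0}" using assms by auto
  hence "finite (of_real ` {-1..1::real} :: complex set)" using fin finite_subset by blast
  hence "finite {-1..1::real}" using finite_imageD inj_of_real inj_on_subset by blast
  thus False using infinite_Icc[of "-1::real" 1] by simp
qed

lemma Lop_cheb: "Lop d (cheb d) = 0"
proof -
  define T where "T = cheb d"
  have eq: "(\<lambda>z. poly T (cos z)) = (\<lambda>z. cos (of_nat d * z))" by (simp add: T_def cheb_cos)
  have E1: "poly (pderiv T) (cos z) * sin z = of_nat d * sin (of_nat d * z)" for z
  proof -
    have "((\<lambda>z. poly T (cos z)) has_field_derivative poly (pderiv T) (cos z) * (- sin z)) (at z)"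
      by (auto intro!: derivative_eq_intros)
    moreover have "((\<lambda>z. poly T (cos z)) has_field_derivative (- sin (of_nat d * z)) * of_nat d) (at z)"
      unfolding eq by (auto intro!: derivative_eq_intros)
    ultimately have "poly (pderiv T) (cos z) * (- sin z) = (- sin (of_nat d * z)) * of_nat d"
      by (rule DERIV_unique)
    thus ?thesis by (simp add: algebra_simps)
  qed
  have eq2: "(\<lambda>z. poly (pderiv T) (cos z) * sin z) = (\<lambda>z. of_nat d * sin (of_nat d * z))"
    using E1 by auto
  have E2: "poly (pderiv (pderiv T)) (cos z) * (- sin z) * sin z + poly (pderiv T) (cos z) * cos z
     = of_nat d * (cos (of_nat d * z) * of_nat d)" for z
  proof -
    have "((\<lambda>z. poly (pderiv T) (cos z) * sin z) has_field_derivative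
       poly (pderiv (pderiv T)) (cos z) * (- sin z) * sin z + poly (pderiv T) (cos z) * cos z) (at z)"
      by (auto intro!: derivative_eq_intros)
    moreover have "((\<lambda>z. poly (pderiv T) (cos z) * sin z) has_field_derivative
        of_nat d * (cos (of_nat d * z) * of_nat d)) (at z)"
      unfolding eq2 by (auto intro!: derivative_eq_intros)
    ultimately show ?thesis by (rule DERIV_unique)
  qed
  have "poly (Lop d T) (cos z) = 0" for z
  proof -
    have s: "sin z ^ 2 = 1 - cos z ^ 2" by (simp add: sin_squared_eq)
    have "poly (Lop d T) (cos z) = (1 - cos z ^ 2) * poly (pderiv (pderiv T)) (cos z)
        - cos z * poly (pderiv T) (cos z) + of_nat d ^ 2 * poly T (cos z)"
      by (simp add: Lop_def algebra_simps power2_eq_square)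
    also have "\<dots> = 0" using E2[of z] unfolding s[symmetric] T_def cheb_cos
      by (simp add: algebra_simps power2_eq_square)
    finally show ?thesis .
  qed
  hence "Lop d T = 0"
    by (intro poly_zero_on_interval) (metis cos_arccos cos_of_real)
  thus ?thesis by (simp add: T_def)
qed

lemma cheb_one: "poly (cheb d) 1 = 1"
  using cheb_cos[of d 0] by simp



lemma order_dvd_complex:
  fixes P Q :: "complex poly"
  assumes "P \<noteq> 0" "\<And>a. order a P \<le> order a Q"
  shows "P dvd Q"
  using assms
proof (induction "degree P" arbitrary: P Q rule: less_induct)
  case (less P)
  show ?case
  proof (cases "Q = 0")
    case True thus ?thesis by simp
  next
    case Qnz: False
    show ?thesis
    proof (cases "degree P = 0")
      case True
      hence "is_unit P" using less.prems(1) by (simp add: is_unit_iff_degree)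
      thus ?thesis by (rule unit_imp_dvd)
    next
      case False
      then obtain a where a: "poly P a = 0" using alg_closed_imp_poly_has_root by blast
      then obtain P1 where P1: "P = [:-a,1:] * P1" using poly_eq_0_iff_dvd by (metis dvdE)
      have "order a P \<noteq> 0" using a less.prems(1) order_root by blast
      hence "order a Q \<noteq> 0" using less.prems(2)[of a] by linarith
      hence "poly Q a = 0" using order_root by blast
      then obtain Q1 where Q1: "Q = [:-a,1:] * Q1" using poly_eq_0_iff_dvd by (metis dvdE)
      have P1nz: "P1 \<noteq> 0" using P1 less.prems(1) by auto
      have Q1nz: "Q1 \<noteq> 0" using Q1 Qnz by auto
      have "degree P = Suc (degree P1)" unfolding P1 using P1nz by (subst degree_mult_eq) auto
      hence dlt: "degree P1 < degree P" by simp
      have "order b P1 \<le> order b Q1" for b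
      proof -
        have "order b P = order b [:-a,1:] + order b P1" by (metis P1 order_mult less.prems(1))
        moreover have "order b Q = order b [:-a,1:] + order b Q1" by (metis Q1 order_mult Qnz)
        ultimately show ?thesis using less.prems(2)[of b] by linarith
      qed
      hence "P1 dvd Q1" using less.hyps[OF dlt P1nz] by blast
      thus ?thesis unfolding P1 Q1 by (rule mult_dvd_mono[OF dvd_refl])
    qed
  qed
qed

lemma seg_iff: "z \<in> closed_segment (-1) (1::complex) \<longleftrightarrow> Im z = 0 \<and> -1 \<le> Re z \<and> Re z \<le> 1"
proof
  assume "z \<in> closed_segment (-1) (1::complex)"
  then obtain u where u: "0 \<le> u" "u \<le> 1" "z = (1 - u) *\<^sub>R (-1) + u *\<^sub>R 1"
    by (auto simp: in_segment)
  thus "Im z = 0 \<and> -1 \<le> Re z \<and> Re z \<le> 1" by simp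
next
  assume h: "Im z = 0 \<and> -1 \<le> Re z \<and> Re z \<le> 1"
  define u where "u = (Re z + 1) / 2"
  have "z = (1 - u) *\<^sub>R (-1) + u *\<^sub>R (1::complex)"
    using h by (intro complex_eqI) (auto simp: u_def field_simps)
  moreover have "0 \<le> u" "u \<le> 1" using h by (auto simp: u_def)
  ultimately show "z \<in> closed_segment (-1) (1::complex)" by (auto simp: in_segment)
qed

lemma Re_poly_of_real: "Re (poly p (of_real x)) = poly (map_poly Re p) x"
  by (induction p) (auto simp: map_poly_pCons)

lemma Im_poly_of_real: "Im (poly p (of_real x)) = poly (map_poly Im p) x"
  by (induction p) (auto simp: map_poly_pCons)

lemma map_poly_Re_pderiv: "map_poly Re (pderiv p) = pderiv (map_poly Re p)"
  by (intro poly_eqI) (simp add: coeff_map_poly coeff_pderiv)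

lemma map_poly_Im_pderiv: "map_poly Im (pderiv p) = pderiv (map_poly Im p)"
  by (intro poly_eqI) (simp add: coeff_map_poly coeff_pderiv)

lemma poly_zero_on_interval_real:
  fixes P :: "real poly"
  assumes "\<And>x::real. -1 \<le> x \<Longrightarrow> x \<le> 1 \<Longrightarrow> poly P x = 0"
  shows "P = 0"
proof (rule ccontr)
  assume "P \<noteq> 0"
  hence fin: "finite {x. poly P x = 0}" by (rule poly_roots_finite)
  have "{-1..1::real} \<subseteq> {x. poly P x = 0}" using assms by auto
  hence "finite {-1..1::real}" using fin finite_subset by blast
  thus False using infinite_Icc[of "-1::real" 1] by simp
qed



lemma ode_id: "pderiv ([:1,0,-1:] * (pderiv q)^2) - smult (of_nat (d^2)) (pderiv (1 - q^2)) = pderiv q * smult 2 (Lop d q)"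
proof -
  have "pderiv [:1,0,-1::complex:] = [:0,-2:]" by (simp add: pderiv_pCons)
  note L = this
  show ?thesis
    unfolding Lop_def power2_eq_square pderiv_mult pderiv_diff L pderiv_1
    by (subst poly_eq_poly_eq_iff[symmetric], rule ext) (simp add: algebra_simps)
qed



lemma cheb_char:
  fixes q :: "complex poly"
  assumes dq: "degree q = d" and d1: "d \<ge> 1"
    and H: "\<And>z. poly q z \<in> closed_segment (-1) 1 \<longleftrightarrow> z \<in> closed_segment (-1) 1"
  shows "\<exists>c. (c = 1 \<or> c = -1) \<and> q = smult c (cheb d)"
proof -
  define qr where "qr = map_poly Re q"
  define qi where "qi = map_poly Im q"
  have inS: "Im (poly q (of_real x)) = 0 \<and> -1 \<le> Re (poly q (of_real x)) \<and> Re (poly q (of_real x)) \<le> 1"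
    if "-1 \<le> x" "x \<le> 1" for x
    using H[of "of_real x"] that by (simp add: seg_iff)
  have "qi = 0"
    by (rule poly_zero_on_interval_real) (use inS in \<open>auto simp: qi_def Im_poly_of_real\<close>)
  hence Imq: "Im (poly q (of_real x)) = 0" for x by (simp add: Im_poly_of_real qi_def)
  have Imq': "Im (poly (pderiv q) (of_real x)) = 0" for x
    using \<open>qi = 0\<close> by (simp add: Im_poly_of_real map_poly_Im_pderiv qi_def)
  have qreal: "poly q (of_real x) = of_real (poly qr x)" for x
    using Imq[of x] by (intro complex_eqI) (simp_all add: Re_poly_of_real qr_def)
  have q'real: "poly (pderiv q) (of_real x) = of_real (poly (pderiv qr) x)" for x
    using Imq'[of x] by (intro complex_eqI) (simp_all add: Re_poly_of_real qr_def map_poly_Re_pderiv)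
  have qrb: "-1 \<le> poly qr x \<and> poly qr x \<le> 1" if "-1 \<le> x" "x \<le> 1" for x
    using inS[OF that] by (simp add: qreal)
  have fermat: "poly (pderiv qr) r = 0" if r: "-1 < r" "r < 1" "poly qr r = 1 \<or> poly qr r = -1" for r
  proof -
    define e where "e = min (1 - r) (1 + r)"
    have e: "0 < e" using r by (simp add: e_def)
    have near: "\<forall>y. \<bar>r - y\<bar> < e \<longrightarrow> -1 \<le> poly qr y \<and> poly qr y \<le> 1"
      using qrb by (auto simp: e_def abs_if split: if_splits)
    show ?thesis
    proof (cases "poly qr r = 1")
      case True
      show ?thesis by (rule DERIV_local_max[OF poly_DERIV e]) (use near True in auto)
    next
      case False
      hence "poly qr r = -1" using r by auto
      thus ?thesis by (intro DERIV_local_min[OF poly_DERIV e]) (use near in auto)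
    qed
  qed
  define L :: "complex poly" where "L = [:1,0,-1:]"
  define P :: "complex poly" where "P = 1 - q^2"
  define Q where "Q = L * (pderiv q)^2"
  have qnc: "q - [:s:] \<noteq> 0" for s
  proof
    assume "q - [:s:] = 0"
    hence "q = [:s:]" by simp
    thus False using dq d1 by simp
  qed
  have qnc2: "q + [:s:] \<noteq> 0" for s
  proof
    assume "q + [:s:] = 0"
    hence "q = - [:s:]" by (metis minus_unique minus_minus add.commute)
    hence "q = [:-s:]" by simp
    thus False using dq d1 by simp
  qed
  have factor: "P = - ((q - [:s:]) * (q + [:s:]))" if "s^2 = 1" for s
  proof -
    have "poly P x = poly (- ((q - [:s:]) * (q + [:s:]))) x" for x
      using that by (simp add: P_def algebra_simps power2_eq_square)
    hence "poly P = poly (- ((q - [:s:]) * (q + [:s:])))" by (rule ext)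
    thus ?thesis by (simp add: poly_eq_poly_eq_iff)
  qed
  have Pnz: "P \<noteq> 0" using factor[of 1] qnc[of 1] qnc2[of 1] by simp
  have q'nz: "pderiv q \<noteq> 0" using dq d1 by (metis degree_0 le_numeral_extra(2) pderiv_eq_0_iff le_zero_eq)
  have Lnz: "L \<noteq> 0" by (simp add: L_def)
  have Qnz: "Q \<noteq> 0" using q'nz Lnz by (simp add: Q_def)
  have ord: "order a P \<le> order a Q" for a
  proof (cases "poly q a = 1 \<or> poly q a = -1")
    case False
    hence "poly P a \<noteq> 0" by (simp add: P_def power2_eq_square) (metis square_eq_1_iff)
    thus ?thesis by (simp add: order_0I)
  next
    case True
    then obtain s where s: "s = 1 \<or> s = -1" "poly q a = s" by blast
    have s2: "s^2 = 1" using s by auto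
    define k where "k = order a (pderiv q)"
    have "pderiv (q - [:s:]) = pderiv q" by (simp add: pderiv_diff)
    hence oA: "order a (q - [:s:]) = Suc k"
      using order_pderiv[OF qnc[of s]] s by (simp add: k_def)
    have "poly (q + [:s:]) a \<noteq> 0" using s by auto
    hence oB: "order a (q + [:s:]) = 0" by (rule order_0I)
    have "order a P = order a ((q - [:s:]) * (q + [:s:]))" by (simp add: factor[OF s2])
    also have "\<dots> = Suc k" using oA oB Pnz factor[OF s2] order_mult by (metis add_0_right neg_equal_0_iff_equal)
    finally have oP: "order a P = Suc k" .
    have oQ: "order a Q = order a L + k + k"
      using Qnz unfolding Q_def power2_eq_square k_def
      by (metis (no_types, lifting) add.assoc mult.assoc order_mult mult_eq_0_iff)
    have "a \<in> closed_segment (-1) 1" using H[of a] s by (auto simp: seg_iff)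
    hence aR: "a = of_real (Re a)" "-1 \<le> Re a" "Re a \<le> 1" by (auto simp: seg_iff complex_eq_iff)
    show ?thesis
    proof (cases "k = 0")
      case False thus ?thesis using oP oQ by linarith
    next
      case True
      have "poly (pderiv q) a \<noteq> 0" using True q'nz order_root unfolding k_def by blast
      have "Re a = -1 \<or> Re a = 1"
      proof (rule ccontr)
        assume "\<not> (Re a = -1 \<or> Re a = 1)"
        hence "-1 < Re a" "Re a < 1" using aR by auto
        moreover have "poly qr (Re a) = 1 \<or> poly qr (Re a) = -1"
          using s qreal[of "Re a"] aR(1) by (auto, metis of_real_eq_iff of_real_minus of_real_1)
        ultimately have "poly (pderiv qr) (Re a) = 0" by (rule fermat)
        hence "poly (pderiv q) a = 0" using q'real[of "Re a"] aR(1) by simp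
        thus False using \<open>poly (pderiv q) a \<noteq> 0\<close> by blast
      qed
      hence "poly L a = 0" using aR(1) by (auto simp: L_def)
      hence "order a L \<noteq> 0" using Lnz order_root by blast
      thus ?thesis using oP oQ by linarith
    qed
  qed
  have "P dvd Q" by (rule order_dvd_complex[OF Pnz ord])
  then obtain h where h: "Q = P * h" by (elim dvdE)
  have e: "q - [:1:] = q + [:-1:]" by simp
  have dA: "degree (q - [:1:]) = d" "degree (q + [:1:]) = d" using dq d1
    by (simp_all only: e, simp_all add: degree_add_eq_left)
  have dP: "degree P = 2 * d"
    using factor[of 1] qnc[of 1] qnc2[of 1] dA by (simp add: degree_mult_eq)
  have dL: "degree L = 2" by (simp add: L_def)
  have dq': "degree (pderiv q) = d - 1" using dq by (simp add: degree_pderiv)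
  have dQ: "degree Q = 2 * d" using q'nz Lnz dq' dL d1 by (simp add: Q_def degree_mult_eq degree_power_eq)
  have hnz: "h \<noteq> 0" using h Qnz by auto
  have "degree Q = degree P + degree h" using h hnz Pnz by (simp add: degree_mult_eq)
  hence "degree h = 0" using dP dQ by simp
  then obtain h0 where h0: "h = [:h0:]" by (metis degree_eq_zeroE)
  have QP: "Q = smult h0 P" using h h0 by simp
  define cq where "cq = lead_coeff q"
  have lcnz: "cq \<noteq> 0" using dq d1 by (auto simp: cq_def)
  have "lead_coeff (pderiv q) = of_nat d * cq"
    using dq' dq d1 by (simp add: coeff_pderiv cq_def)
  hence lQ: "lead_coeff Q = - ((of_nat d * cq) ^ 2)"
  proof -
    have lL: "lead_coeff L = -1" by (simp add: L_def)
    assume "lead_coeff (pderiv q) = of_nat d * cq"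
    thus ?thesis unfolding Q_def lead_coeff_mult lead_coeff_power lL by simp
  qed
  have lP: "lead_coeff P = - (cq ^ 2)"
  proof -
    have "lead_coeff P = - (lead_coeff (q - [:1:]) * lead_coeff (q + [:1:]))"
      by (simp add: factor[of 1] lead_coeff_mult lead_coeff_minus)
    moreover have "lead_coeff (q - [:1:]) = cq" "lead_coeff (q + [:1:]) = cq"
      using dq d1 dA by (simp_all add: cq_def coeff_pCons split: nat.split)
    ultimately show ?thesis by (simp add: power2_eq_square)
  qed
  have "lead_coeff Q = h0 * lead_coeff P" by (simp add: QP)
  hence "h0 = of_nat (d^2)" using lQ lP lcnz by (simp add: power2_eq_square field_simps)
  hence QP': "Q = smult (of_nat (d^2)) P" using QP by simp
  have "pderiv q * smult 2 (Lop d q) = 0"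
    using ode_id[of q d] QP' by (simp add: Q_def P_def L_def pderiv_smult)
  hence Lq: "Lop d q = 0" using q'nz by simp
  have cnz: "cheb d \<noteq> 0" using cheb_one[of d] by auto
  obtain c where c: "q = smult c (cheb d)" using Lop_unique[OF Lq Lop_cheb cnz] by blast
  have "poly Q 1 = 0" by (simp add: Q_def L_def)
  hence "poly P 1 = 0" using QP' d1 by simp
  hence "c^2 = 1" using c cheb_one[of d] by (simp add: P_def)
  hence "c = 1 \<or> c = -1" by (simp add: power2_eq_1_iff)
  thus ?thesis using c by blast
qed



lemma chordal_le: "chordal_dist z w \<le> 2 * cmod (z - w)"
proof -
  have a1: "1 \<le> sqrt (1 + (cmod z)\<^sup>2)" using real_sqrt_le_mono[of 1 "1 + (cmod z)\<^sup>2"] by simp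
  have a2: "1 \<le> sqrt (1 + (cmod w)\<^sup>2)" using real_sqrt_le_mono[of 1 "1 + (cmod w)\<^sup>2"] by simp
  have D: "1 \<le> sqrt (1 + (cmod z)\<^sup>2) * sqrt (1 + (cmod w)\<^sup>2)"
    using mult_mono[OF a1 a2] by simp
  have "2 * cmod (z - w) / (sqrt (1 + (cmod z)\<^sup>2) * sqrt (1 + (cmod w)\<^sup>2)) \<le> 2 * cmod (z - w) / 1"
    by (rule divide_left_mono[OF D]) (use D in simp_all)
  thus ?thesis unfolding chordal_dist_def by simp
qed

lemma sqrt_inv_aux: "x > 0 \<Longrightarrow> sqrt (1 + (1/x)\<^sup>2) = sqrt (1 + x\<^sup>2) / x"
proof -
  assume x: "x > 0"
  have "1 + (1/x)\<^sup>2 = (1 + x\<^sup>2) / x\<^sup>2" using x by (simp add: field_simps power2_eq_square)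
  thus ?thesis using x by (simp add: real_sqrt_divide)
qed

lemma chordal_inv:
  assumes "z \<noteq> 0" "w \<noteq> 0"
  shows "chordal_dist (1/z) (1/w) = chordal_dist z w"
proof -
  have nz: "cmod z > 0" "cmod w > 0" using assms by auto
  have "1/z - 1/w = (w - z) / (z * w)" using assms by (simp add: field_simps)
  hence 1: "cmod (1/z - 1/w) = cmod (z - w) / (cmod z * cmod w)"
    by (simp add: norm_divide norm_mult norm_minus_commute)
  have 2: "cmod (1/z) = 1 / cmod z" "cmod (1/w) = 1 / cmod w" by (simp_all add: norm_divide)
  show ?thesis unfolding chordal_dist_def 1 2 sqrt_inv_aux[OF nz(1)] sqrt_inv_aux[OF nz(2)]
    using nz by (simp add: field_simps)
qed

lemma chordal_lower:
  assumes R: "R \<ge> 0" and y: "cmod y \<le> R" and x: "cmod x \<ge> 2*R+1"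
  shows "chordal_dist x y \<ge> 1/(1+R)"
proof -
  have s1: "sqrt (1 + (cmod x)\<^sup>2) \<le> 1 + cmod x"
    by (rule real_le_lsqrt) (auto simp: power2_eq_square algebra_simps)
  have s2: "sqrt (1 + (cmod y)\<^sup>2) \<le> 1 + R"
    using y mult_mono[of "cmod y" R "cmod y" R] R by (intro real_le_lsqrt) (auto simp: power2_eq_square algebra_simps)
  have pos: "sqrt (1 + (cmod x)\<^sup>2) * sqrt (1 + (cmod y)\<^sup>2) > 0"
    by (intro mult_pos_pos real_sqrt_gt_zero) (auto intro: add_pos_nonneg)
  have "cmod (x - y) \<ge> cmod x - R" using norm_triangle_ineq2[of x y] y by linarith
  hence num: "2 * cmod (x - y) \<ge> 1 + cmod x" using x by linarith
  have "(1 + cmod x) * (1 + R) \<ge> sqrt (1 + (cmod x)\<^sup>2) * sqrt (1 + (cmod y)\<^sup>2)"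
    using s1 s2 by (intro mult_mono) auto
  hence "1/(1+R) \<le> (1 + cmod x) / (sqrt (1 + (cmod x)\<^sup>2) * sqrt (1 + (cmod y)\<^sup>2))"
    using pos R by (simp add: field_simps)
  also have "\<dots> \<le> 2 * cmod (x - y) / (sqrt (1 + (cmod x)\<^sup>2) * sqrt (1 + (cmod y)\<^sup>2))"
    using num pos by (intro divide_right_mono) auto
  finally show ?thesis by (simp add: chordal_dist_def)
qed

lemma iter_poly: fixes p :: "complex poly" shows "\<exists>P. (poly p ^^ n) = poly P"
proof (induction n)
  case 0 show ?case by (intro exI[of _ "[:0,1:]"]) (rule ext, simp)
next
  case (Suc n)
  then obtain P where "(poly p ^^ n) = poly P" by blast
  hence "(poly p ^^ Suc n) = poly (p \<circ>\<^sub>p P)" by (auto simp: poly_pcompose)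
  thus ?case by blast
qed

lemma iter_holo: fixes p :: "complex poly" shows "(poly p ^^ n) holomorphic_on S"
proof -
  obtain P where "(poly p ^^ n) = poly P" using iter_poly[where p=p and n=n] by blast
  moreover have "(\<lambda>z. poly P z) holomorphic_on S" by (intro holomorphic_intros)
  ultimately show ?thesis by simp
qed

lemma iter_cont: fixes p :: "complex poly" shows "continuous_on S (poly p ^^ n)"
  by (rule holomorphic_on_imp_continuous_on[OF iter_holo])

lemma fatou_crit:
  assumes U: "open U"
    and hol: "\<And>n. h n holomorphic_on U"
    and bd: "\<And>n z. z \<in> U \<Longrightarrow> cmod (h n z) \<le> M"
    and ch: "\<And>n z w. z \<in> U \<Longrightarrow> w \<in> U \<Longrightarrow>
               chordal_dist ((poly p ^^ n) z) ((poly p ^^ n) w) \<le> 2 * cmod (h n z - h n w)"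
  shows "U \<subseteq> fatou_set p"
proof -
  have "iterates_equicontinuous_on U (poly p)"
    unfolding iterates_equicontinuous_on_def
  proof (intro ballI allI impI)
    fix z0 :: complex and \<epsilon> :: real
    assume z0: "z0 \<in> U" and e: "\<epsilon> > 0"
    obtain r0 where r0: "r0 > 0" "cball z0 r0 \<subseteq> U" using U z0 open_contains_cball by blast
    define r where "r = r0 / 2"
    have r: "r > 0" "cball z0 (2*r) \<subseteq> U" using r0 by (auto simp: r_def)
    have M0: "M \<ge> 0" using bd[OF z0, of 0] by (meson norm_ge_zero order_trans)
    define B where "B = (M+1)/r"
    have B: "B > 0" using M0 r by (simp add: B_def)
    have lip: "cmod (h n z - h n z0) \<le> B * cmod (z - z0)" if z: "z \<in> ball z0 r" for n z
    proof (rule field_differentiable_bound[of "ball z0 r" _ "deriv (h n)"])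
      show "convex (ball z0 r)" by simp
      fix w assume w: "w \<in> ball z0 r"
      have "cball w r \<subseteq> cball z0 (2*r)"
      proof
        fix v assume "v \<in> cball w r"
        thus "v \<in> cball z0 (2*r)" using w dist_triangle[of z0 v w] by auto
      qed
      hence sub: "cball w r \<subseteq> U" using r(2) by blast
      have "(h n has_field_derivative deriv (h n) w) (at w)"
        using hol[of n] U sub r(1) by (meson centre_in_cball holomorphic_derivI less_imp_le subsetD)
      thus "(h n has_field_derivative deriv (h n) w) (at w within ball z0 r)"
        by (rule has_field_derivative_at_within)
      have "cmod ((deriv ^^ 1) (h n) w) \<le> (fact 1) * (M+1) / r ^ 1"
      proof (rule Cauchy_higher_deriv_bound[where y=0])
        show "h n holomorphic_on ball w r" using hol[of n] sub ball_subset_cball holomorphic_on_subset by blast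
        show "continuous_on (cball w r) (h n)"
          using hol[of n] sub holomorphic_on_imp_continuous_on holomorphic_on_subset by blast
        show "h n v \<in> ball 0 (M+1)" if "v \<in> ball w r" for v
        proof -
          have "v \<in> U" using that sub ball_subset_cball by blast
          thus ?thesis using bd[of v n] by simp
        qed
      qed (use r in auto)
      thus "cmod (deriv (h n) w) \<le> B" by (simp add: B_def)
    qed (use z r in auto)
    define \<delta> where "\<delta> = min r (\<epsilon> / (2*B + 1))"
    have \<delta>: "\<delta> > 0" using r e B by (simp add: \<delta>_def)
    show "\<exists>\<delta>>0. \<forall>n. \<forall>z\<in>U. dist z z0 < \<delta> \<longrightarrow> chordal_dist ((poly p ^^ n) z) ((poly p ^^ n) z0) < \<epsilon>"
    proof (intro exI[of _ \<delta>] conjI allI ballI impI \<delta>)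
      fix n z assume z: "z \<in> U" "dist z z0 < \<delta>"
      hence zb: "z \<in> ball z0 r" by (auto simp: \<delta>_def dist_commute)
      have "chordal_dist ((poly p ^^ n) z) ((poly p ^^ n) z0) \<le> 2 * cmod (h n z - h n z0)"
        by (rule ch[OF z(1) z0])
      also have "\<dots> \<le> 2 * (B * cmod (z - z0))" using lip[OF zb] by simp
      also have "\<dots> < \<epsilon>"
      proof -
        have "cmod (z - z0) < \<epsilon> / (2*B+1)" using z(2) by (simp add: \<delta>_def dist_norm)
        hence "(2*B) * cmod (z - z0) \<le> (2*B) * (\<epsilon> / (2*B+1))" using B by (intro mult_left_mono) auto
        also have "\<dots> < \<epsilon>" using B e by (simp add: field_simps)
        finally show ?thesis by simp
      qed
      finally show "chordal_dist ((poly p ^^ n) z) ((poly p ^^ n) z0) < \<epsilon>" .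
    qed
  qed
  hence "U \<in> {V. open V \<and> iterates_equicontinuous_on V (poly p)}" using U by (intro CollectI conjI)
  thus ?thesis unfolding fatou_set_def by (rule Union_upper)
qed



lemma escape:
  fixes p :: "complex poly"
  assumes "degree p \<ge> 2"
  shows "\<exists>R\<ge>1. \<forall>z. cmod z \<ge> R \<longrightarrow> cmod (poly p z) \<ge> 2 * cmod z"
proof -
  obtain a p1 where p: "p = pCons a p1" by (cases p) auto
  obtain b p2 where p1: "p1 = pCons b p2" by (cases p1) auto
  have "p2 \<noteq> 0"
  proof
    assume "p2 = 0"
    hence "degree p \<le> 1" using p p1 by (simp add: degree_pCons_le)
    thus False using assms by simp
  qed
  then obtain r where r: "\<forall>z. r \<le> norm z \<longrightarrow> 2 + cmod a \<le> norm (poly (pCons b p2) z)"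
    using poly_infinity[of p2 "2 + cmod a" b] by blast
  define R where "R = max r 1"
  have "cmod (poly p z) \<ge> 2 * cmod z" if z: "cmod z \<ge> R" for z
  proof -
    have z1: "cmod z \<ge> 1" "cmod z \<ge> r" using z by (auto simp: R_def)
    have b: "cmod (poly p1 z) \<ge> 2 + cmod a" using r z1 p1 by auto
    have "poly p z = a + z * poly p1 z" by (simp add: p)
    hence "cmod (poly p z) \<ge> cmod (z * poly p1 z) - cmod a"
      by (metis add.commute norm_diff_ineq)
    moreover have "cmod (z * poly p1 z) \<ge> cmod z * (2 + cmod a)"
      using b by (simp add: norm_mult mult_left_mono)
    moreover have "cmod z * (2 + cmod a) - cmod a \<ge> 2 * cmod z"
      using z1 mult_left_mono[of 1 "cmod z" "cmod a"] by (simp add: algebra_simps)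
    ultimately show ?thesis by linarith
  qed
  thus ?thesis by (intro exI[of _ R]) (auto simp: R_def)
qed

lemma escape_iter:
  fixes p :: "complex poly"
  assumes R: "R \<ge> 1" "\<forall>z. cmod z \<ge> R \<longrightarrow> cmod (poly p z) \<ge> 2 * cmod z"
    and z: "cmod z \<ge> R"
  shows "cmod ((poly p ^^ n) z) \<ge> 2^n * cmod z"
proof (induction n)
  case 0 show ?case by simp
next
  case (Suc n)
  have "2^n * cmod z \<ge> cmod z" using z R(1) by (simp add: mult_le_cancel_right1)
  hence "cmod ((poly p ^^ n) z) \<ge> R" using Suc z by linarith
  hence "cmod (poly p ((poly p ^^ n) z)) \<ge> 2 * cmod ((poly p ^^ n) z)" using R(2) by blast
  thus ?case using Suc by simp
qed

lemma julia_bounded: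
  fixes p :: "complex poly"
  assumes R: "R \<ge> 1" "\<forall>z. cmod z \<ge> R \<longrightarrow> cmod (poly p z) \<ge> 2 * cmod z"
  shows "julia_set p \<subseteq> cball 0 R"
proof -
  define U where "U = {z. R < cmod z}"
  have big: "cmod ((poly p ^^ n) z) \<ge> R" if "z \<in> U" for n z
  proof -
    have "cmod ((poly p ^^ n) z) \<ge> 2^n * cmod z" using escape_iter[OF R] that by (simp add: U_def)
    moreover have "2^n * cmod z \<ge> cmod z" using that R(1) by (simp add: U_def mult_le_cancel_right1)
    ultimately show ?thesis using that by (simp add: U_def)
  qed
  have nz: "(poly p ^^ n) z \<noteq> 0" if "z \<in> U" for n z using big[OF that, of n] R(1) by auto
  have "U \<subseteq> fatou_set p"
  proof (rule fatou_crit[where h = "\<lambda>n z. 1 / (poly p ^^ n) z" and M = 1])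
    show "open U" unfolding U_def by (intro open_Collect_less continuous_intros)
    show "(\<lambda>z. 1 / (poly p ^^ n) z) holomorphic_on U" for n
      by (rule holomorphic_on_divide) (auto intro: iter_holo dest: nz)
    show "cmod (1 / (poly p ^^ n) z) \<le> 1" if "z \<in> U" for n z
      using big[OF that, of n] R(1) by (simp add: norm_divide divide_le_eq)
    show "chordal_dist ((poly p ^^ n) z) ((poly p ^^ n) w)
          \<le> 2 * cmod (1 / (poly p ^^ n) z - 1 / (poly p ^^ n) w)" if "z \<in> U" "w \<in> U" for n z w
    proof -
      have "chordal_dist ((poly p ^^ n) z) ((poly p ^^ n) w) =
            chordal_dist (1 / (poly p ^^ n) z) (1 / (poly p ^^ n) w)"
        using chordal_inv[of "1 / (poly p ^^ n) z" "1 / (poly p ^^ n) w"] nz that by simp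
      thus ?thesis using chordal_le by simp
    qed
  qed
  thus ?thesis unfolding julia_set_def U_def by (force simp: not_less)
qed



lemma iter_fixed: "poly p z0 = z0 \<Longrightarrow> (poly p ^^ n) z0 = z0"
  by (induction n) auto

lemma julia_nonempty:
  fixes p :: "complex poly"
  assumes dp: "degree p \<ge> 2"
    and R: "R \<ge> 1" "\<forall>z. cmod z \<ge> R \<longrightarrow> cmod (poly p z) \<ge> 2 * cmod z"
  shows "julia_set p \<noteq> {}"
proof -
  define Kf where "Kf = {z. \<forall>n. cmod ((poly p ^^ n) z) \<le> R}"
  have "Kf = (\<Inter>n. {z. cmod ((poly p ^^ n) z) \<le> R})" by (auto simp: Kf_def)
  hence clK: "closed Kf"
    by (simp add: closed_INT closed_Collect_le continuous_on_norm iter_cont)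
  have "degree (p + [:0,-1:]) = degree p" using dp by (intro degree_add_eq_left) auto
  then obtain z0 where "poly (p + [:0,-1:]) z0 = 0" using dp alg_closed_imp_poly_has_root[of "p + [:0,-1:]"] by auto
  hence fix0: "poly p z0 = z0" by simp
  have "cmod z0 \<le> R"
  proof (rule ccontr)
    assume "\<not> cmod z0 \<le> R"
    hence "cmod (poly p z0) \<ge> 2 * cmod z0" using R by auto
    hence "cmod z0 \<le> 0" using fix0 by simp
    thus False using \<open>\<not> cmod z0 \<le> R\<close> R(1) by simp
  qed
  hence "z0 \<in> Kf" by (simp add: Kf_def iter_fixed[OF fix0])
  moreover have "complex_of_real (R+1) \<notin> Kf"
  proof
    assume "complex_of_real (R+1) \<in> Kf"
    hence "cmod ((poly p ^^ 1) (of_real (R+1))) \<le> R" unfolding Kf_def by blast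
    moreover have "cmod (complex_of_real (R+1)) \<ge> R" using R(1) by (simp add: abs_of_nonneg)
    hence "cmod (poly p (of_real (R+1))) \<ge> 2 * cmod (complex_of_real (R+1))"
      using R(2) by blast
    ultimately show False using R(1) by (simp add: abs_of_nonneg)
  qed
  ultimately obtain w where w: "w \<in> frontier Kf" using frontier_not_empty[of Kf] by blast
  have wK: "w \<in> Kf" using w clK frontier_subset_closed by blast
  have wI: "w \<notin> interior Kf" using w by (simp add: frontier_def)
  have "w \<notin> fatou_set p"
  proof
    assume "w \<in> fatou_set p"
    then obtain U where U: "open U" "iterates_equicontinuous_on U (poly p)" "w \<in> U"
      unfolding fatou_set_def by blast
    define \<epsilon> where "\<epsilon> = 1 / (1 + R)"
    have e: "\<epsilon> > 0" using R by (simp add: \<epsilon>_def)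
    obtain \<delta> where \<delta>: "\<delta> > 0" "\<And>n z. z \<in> U \<Longrightarrow> dist z w < \<delta> \<Longrightarrow>
        chordal_dist ((poly p ^^ n) z) ((poly p ^^ n) w) < \<epsilon>"
      using U(2) U(3) e unfolding iterates_equicontinuous_on_def by meson
    obtain e1 where e1: "e1 > 0" "ball w e1 \<subseteq> U" using U(1) U(3) open_contains_ball by blast
    have "\<not> ball w (min \<delta> e1) \<subseteq> Kf"
    proof
      assume "ball w (min \<delta> e1) \<subseteq> Kf"
      hence "ball w (min \<delta> e1) \<subseteq> interior Kf" by (simp add: interior_maximal)
      moreover have "w \<in> ball w (min \<delta> e1)" using \<delta>(1) e1(1) by simp
      ultimately show False using wI by blast
    qed
    then obtain z where z: "z \<in> ball w (min \<delta> e1)" "z \<notin> Kf" by blast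
    then obtain n where n: "cmod ((poly p ^^ n) z) > R" by (auto simp: Kf_def not_le)
    have "cmod ((poly p ^^ 2) ((poly p ^^ n) z)) \<ge> 2^2 * cmod ((poly p ^^ n) z)"
      using escape_iter[OF R, of "(poly p ^^ n) z" 2] n by simp
    moreover have "(poly p ^^ (2 + n)) z = (poly p ^^ 2) ((poly p ^^ n) z)" by (simp only: funpow_add comp_def)
    ultimately have big: "cmod ((poly p ^^ (2 + n)) z) \<ge> 2 * R + 1" using n R(1) by simp
    have small: "cmod ((poly p ^^ (2 + n)) w) \<le> R" using wK unfolding Kf_def by blast
    have "chordal_dist ((poly p ^^ (2 + n)) z) ((poly p ^^ (2 + n)) w) \<ge> \<epsilon>"
      unfolding \<epsilon>_def by (rule chordal_lower[OF _ small big]) (use R in simp)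
    moreover have "z \<in> U" "dist z w < \<delta>" using z e1 by (auto simp: dist_commute)
    ultimately show False using \<delta>(2)[of z "2 + n"] by linarith
  qed
  thus ?thesis using wK unfolding julia_set_def by blast
qed

lemma point_fatou:
  fixes p :: "complex poly"
  assumes dp: "degree p \<ge> 2" and pre: "\<And>z. poly p z = c \<longleftrightarrow> z = c"
  shows "c \<in> fatou_set p"
proof -
  have "poly (p - [:c:]) c = 0" using pre by simp
  then obtain s where s: "p - [:c:] = [:-c,1:] * s" using poly_eq_0_iff_dvd by (metis dvdE)
  have dpc: "degree (p - [:c:]) = degree p"
    using dp by (metis degree_add_eq_left degree_pCons_0 diff_conv_add_uminus minus_pCons minus_zero
      zero_less_numeral less_le_trans)
  have snz: "s \<noteq> 0" using s dpc dp by auto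
  have "degree ([:-c,1:] * s) = Suc (degree s)" using snz by (subst degree_mult_eq) auto
  hence ds: "degree s = degree p - 1" using dpc s by simp
  have "poly s c = 0"
  proof (rule ccontr)
    assume nz: "poly s c \<noteq> 0"
    obtain z where z: "poly s z = 0" using alg_closed_imp_poly_has_root[of s] ds dp by auto
    hence "poly (p - [:c:]) z = 0" using s by simp
    hence "z = c" using pre by simp
    thus False using z nz by simp
  qed
  then obtain t where t: "s = [:-c,1:] * t" using poly_eq_0_iff_dvd by (metis dvdE)
  have pz: "poly p z = c + (z - c)^2 * poly t z" for z
  proof -
    have "poly (p - [:c:]) z = poly ([:-c,1:] * ([:-c,1:] * t)) z" by (simp only: s t)
    also have "\<dots> = (z - c) * ((z - c) * poly t z)" by (simp add: algebra_simps)
    finally have "poly p z - c = (z - c) * ((z - c) * poly t z)" by simp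
    thus ?thesis by (simp add: power2_eq_square algebra_simps)
  qed
  have "compact (poly t ` cball c 1)"
    by (intro compact_continuous_image) (auto intro: continuous_intros)
  then obtain M where M: "M > 0" "\<And>x. x \<in> cball c 1 \<Longrightarrow> cmod (poly t x) \<le> M"
    using compact_imp_bounded bounded_pos by (metis imageI)
  define r where "r = 1 / (2 * (M + 1))"
  have r: "r > 0" "r \<le> 1" using M by (auto simp: r_def field_simps)
  have rM: "r * M \<le> 1/2" using M by (simp add: r_def field_simps)
  have maps: "poly p z \<in> ball c r" if z: "z \<in> ball c r" for z
  proof -
    have zc: "cmod (z - c) < r" using z by (simp add: dist_norm norm_minus_commute)
    have tz: "cmod (poly t z) \<le> M" using M(2)[of z] zc r by (simp add: dist_norm norm_minus_commute)
    have "cmod (poly p z - c) = cmod (z - c) * (cmod (z - c) * cmod (poly t z))"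
      by (simp add: pz norm_mult power2_eq_square)
    also have "\<dots> \<le> cmod (z - c) * (r * M)"
      using zc tz r by (intro mult_left_mono mult_mono) auto
    also have "\<dots> \<le> cmod (z - c) * (1/2)" using rM by (intro mult_left_mono) auto
    also have "\<dots> < r" using zc r by simp
    finally show ?thesis by (simp add: dist_norm norm_minus_commute)
  qed
  have itb: "(poly p ^^ n) z \<in> ball c r" if "z \<in> ball c r" for n z
    using that by (induction n) (use maps in auto)
  have "ball c r \<subseteq> fatou_set p"
  proof (rule fatou_crit[where h = "\<lambda>n. poly p ^^ n" and M = "cmod c + r"])
    show "cmod ((poly p ^^ n) z) \<le> cmod c + r" if "z \<in> ball c r" for n z
      using itb[OF that, of n] norm_triangle_ineq2[of "(poly p ^^ n) z" c]
      by (simp add: dist_norm norm_minus_commute)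
  qed (auto intro: iter_holo chordal_le)
  thus ?thesis using r by auto
qed



lemma seg_map:
  fixes u v y :: complex
  assumes uv: "u \<noteq> v"
  defines "a \<equiv> 2 / (v - u)" and "b \<equiv> - (u + v) / (v - u)"
  shows "a * y + b \<in> closed_segment (-1) 1 \<longleftrightarrow> y \<in> closed_segment u v"
proof
  have vu: "v - u \<noteq> 0" using uv by simp
  have ay: "a * y + b = (2 * y - (u + v)) / (v - u)"
  proof -
    have "a * y + b = (2 * y) / (v - u) + (- (u + v)) / (v - u)" by (simp add: a_def b_def)
    also have "\<dots> = (2 * y + - (u + v)) / (v - u)" by (rule add_divide_distrib[symmetric])
    finally show ?thesis by simp
  qed
  assume "a * y + b \<in> closed_segment (-1) 1"
  then obtain t where t: "0 \<le> t" "t \<le> 1" "a * y + b = (1 - t) *\<^sub>R (-1) + t *\<^sub>R 1"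
    by (auto simp: in_segment)
  define T where "T = complex_of_real t"
  have "(1 - t) *\<^sub>R (-1) + t *\<^sub>R (1::complex) = 2 * T - 1"
    by (simp add: scaleR_conv_of_real T_def algebra_simps)
  hence "(2 * y - (u + v)) / (v - u) = 2 * T - 1" using t(3) ay by simp
  hence e: "2 * y - (u + v) = (2 * T - 1) * (v - u)" using vu by (simp add: divide_eq_eq)
  have "2 * y = 2 * ((1 - T) * u + T * v)" using e by (simp add: algebra_simps)
  hence "y = (1 - T) * u + T * v" by (simp only: mult_cancel_left) simp
  hence "y = (1 - t) *\<^sub>R u + t *\<^sub>R v" by (simp add: scaleR_conv_of_real T_def)
  thus "y \<in> closed_segment u v" using t by (auto simp: in_segment)
next
  have vu: "v - u \<noteq> 0" using uv by simp
  assume "y \<in> closed_segment u v"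
  then obtain t where t: "0 \<le> t" "t \<le> 1" "y = (1 - t) *\<^sub>R u + t *\<^sub>R v"
    by (auto simp: in_segment)
  define T where "T = complex_of_real t"
  have ay: "a * y + b = (2 * y - (u + v)) / (v - u)"
  proof -
    have "a * y + b = (2 * y) / (v - u) + (- (u + v)) / (v - u)" by (simp add: a_def b_def)
    also have "\<dots> = (2 * y + - (u + v)) / (v - u)" by (rule add_divide_distrib[symmetric])
    finally show ?thesis by simp
  qed
  have y: "y = (1 - T) * u + T * v" using t(3) by (simp add: scaleR_conv_of_real T_def)
  have "2 * y - (u + v) = (2 * T - 1) * (v - u)" unfolding y by (simp add: algebra_simps)
  hence "a * y + b = 2 * T - 1" using ay vu by simp
  hence "a * y + b = (1 - t) *\<^sub>R (-1) + t *\<^sub>R (1::complex)"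
    by (simp add: scaleR_conv_of_real T_def algebra_simps)
  thus "a * y + b \<in> closed_segment (-1) 1" using t by (auto simp: in_segment)
qed

lemma fatou_open: "open (fatou_set p)"
  unfolding fatou_set_def by (intro open_Union) blast

lemma iter_in: "(\<And>z. z \<in> K \<Longrightarrow> poly p z \<in> K) \<Longrightarrow> z \<in> K \<Longrightarrow> (poly p ^^ n) z \<in> K"
  by (induction n) auto

theorem mainTheorem6:
  fixes p :: "complex poly" and d :: nat
  assumes "degree p = d" and "d \<ge> 2"
    and "convex hull (julia_set p) = {z. poly p z \<in> convex hull (julia_set p)}"
    and "{z. poly p z \<in> convex hull (julia_set p)} = julia_set p"
  shows "\<exists>a b :: complex. a \<noteq> 0 \<and>
           (is_chebyshev d (\<lambda>w. a * poly p ((w - b) / a) + b) \<or>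
            is_chebyshev d (\<lambda>w. - (a * poly p ((w - b) / a) + b)))"
proof -
  define K where "K = julia_set p"
  have dp: "degree p \<ge> 2" using assms by simp
  have hK: "convex hull K = K" using assms(3,4) by (simp add: K_def)
  have cvx: "convex K" using hK by (metis convex_convex_hull)
  have pre: "poly p z \<in> K \<longleftrightarrow> z \<in> K" for z
    using assms(4) hK unfolding K_def[symmetric] by blast
  have clK: "closed K" unfolding K_def julia_set_def using fatou_open
    by (simp add: closed_def Diff_Diff_Int)
  obtain R where R: "R \<ge> 1" "\<forall>z. cmod z \<ge> R \<longrightarrow> cmod (poly p z) \<ge> 2 * cmod z"
    using escape[OF dp] by blast
  have bdK: "K \<subseteq> cball 0 R" unfolding K_def by (rule julia_bounded[OF R])
  have neK: "K \<noteq> {}" unfolding K_def by (rule julia_nonempty[OF dp R])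
  have cpK: "compact K" using clK bdK by (meson bounded_cball bounded_subset compact_eq_bounded_closed)
  have intK: "interior K = {}"
  proof -
    have "interior K \<subseteq> fatou_set p"
    proof (rule fatou_crit[where h = "\<lambda>n. poly p ^^ n" and M = R])
      show "cmod ((poly p ^^ n) z) \<le> R" if "z \<in> interior K" for n z
      proof -
        have "(poly p ^^ n) z \<in> K" using that interior_subset pre by (intro iter_in) auto
        thus ?thesis using bdK by auto
      qed
    qed (auto intro: iter_holo chordal_le)
    moreover have "interior K \<subseteq> K" by (rule interior_subset)
    ultimately show ?thesis unfolding K_def julia_set_def by blast
  qed
  have "aff_dim K \<noteq> int DIM(complex)"
  proof
    assume "aff_dim K = int DIM(complex)"
    hence "rel_interior K = interior K" by (rule interior_rel_interior)
    thus False using rel_interior_eq_empty[OF cvx] neK intK by simp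
  qed
  moreover have "aff_dim K \<le> int DIM(complex)" by (rule aff_dim_le_DIM)
  ultimately have "aff_dim K \<le> 1" by simp
  hence "collinear K" by (simp add: collinear_aff_dim)
  then obtain u v where K: "K = closed_segment u v"
    using compact_convex_collinear_segment[OF neK cpK cvx] by blast
  have uv: "u \<noteq> v"
  proof
    assume "u = v"
    hence Ku: "K = {u}" using K by simp
    have "u \<in> fatou_set p" using pre Ku by (intro point_fatou[OF dp]) auto
    moreover have "u \<in> K" using Ku by simp
    ultimately show False unfolding K_def julia_set_def by blast
  qed
  define a :: complex where "a = 2 / (v - u)"
  define b :: complex where "b = - (u + v) / (v - u)"
  have anz: "a \<noteq> 0" using uv by (simp add: a_def)
  have gmap: "a * y + b \<in> closed_segment (-1) 1 \<longleftrightarrow> y \<in> K" for y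
    unfolding K a_def b_def by (rule seg_map[OF uv])
  define q where "q = smult a (p \<circ>\<^sub>p [:-b/a, 1/a:]) + [:b:]"
  have pq: "poly q w = a * poly p ((w - b) / a) + b" for w
    using anz by (simp add: q_def poly_pcompose field_simps)
  have dq: "degree q = d"
  proof -
    have "degree (p \<circ>\<^sub>p [:-b/a, 1/a:]) = d" using assms(1) anz by (simp add: degree_pcompose)
    hence "degree (smult a (p \<circ>\<^sub>p [:-b/a, 1/a:])) = d" using anz by simp
    thus ?thesis unfolding q_def using assms(2) by (subst degree_add_eq_left) auto
  qed
  have H: "poly q w \<in> closed_segment (-1) 1 \<longleftrightarrow> w \<in> closed_segment (-1) 1" for w
  proof -
    have "poly q w \<in> closed_segment (-1) 1 \<longleftrightarrow> poly p ((w - b) / a) \<in> K" unfolding pq by (rule gmap)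
    also have "\<dots> \<longleftrightarrow> (w - b) / a \<in> K" by (rule pre)
    also have "\<dots> \<longleftrightarrow> a * ((w - b) / a) + b \<in> closed_segment (-1) 1" by (rule gmap[symmetric])
    also have "a * ((w - b) / a) + b = w" using anz by simp
    finally show ?thesis .
  qed
  obtain c where c: "c = 1 \<or> c = -1" "q = smult c (cheb d)"
    using cheb_char[OF dq _ H] assms(2) by auto
  have "is_chebyshev d (\<lambda>w. a * poly p ((w - b) / a) + b) \<or>
          is_chebyshev d (\<lambda>w. - (a * poly p ((w - b) / a) + b))"
  proof -
    show "is_chebyshev d (\<lambda>w. a * poly p ((w - b) / a) + b) \<or>
          is_chebyshev d (\<lambda>w. - (a * poly p ((w - b) / a) + b))"
      using c(1)
    proof
      assume "c = 1"
      hence e: "(\<lambda>w. a * poly p ((w - b) / a) + b) = poly (cheb d)"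
        using c(2) pq by (intro ext) (metis smult_1_left)
      have "is_chebyshev d (\<lambda>w. a * poly p ((w - b) / a) + b)"
        unfolding is_chebyshev_def e using cheb_cos by blast
      thus ?thesis by blast
    next
      assume "c = -1"
      hence e: "(\<lambda>w. - (a * poly p ((w - b) / a) + b)) = poly (cheb d)"
        using c(2) pq by (intro ext) (metis poly_minus minus_minus smult_1_left smult_minus_left)
      have "is_chebyshev d (\<lambda>w. - (a * poly p ((w - b) / a) + b))"
        unfolding is_chebyshev_def e using cheb_cos by blast
      thus ?thesis by blast
    qed
  qed
  thus ?thesis using anz by blast
qed

end
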